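(* (1) If $p$ is a prime with $p\equiv1\pmod6$, then $P_p(3)$ divides $p-1$. (2) If $p$ is a prime with $p\equiv5\pmod6$, then $P_p(3)$ divides $3(p-1)$.
   Context: The Ducci function $D:\mathbb{Z}_p^3\to\mathbb{Z}_p^3$ is $D(x_1,x_2,x_3)=(x_1+x_2,\,x_2+x_3,\,x_3+x_1)$, entries mod $p$. The period $\mathrm{Per}(\mathbf{u})$ is the smallest $k\ge1$ such that $D^{l+k}(\mathbf{u})=D^l(\mathbf{u})$ for some $l\ge0$, and $P_p(3)=\mathrm{Per}(0,0,1)$. *)

theory Defs
  imports "HOL-Computational_Algebra.Primes"
begin

text \<open>Elements of Z_p^3 are represented as triples of integers reduced mod p.\<close>

definition ducci :: "int \<Rightarrow> int \<times> int \<times> int \<Rightarrow> int \<times> int \<times> int" where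
  "ducci p u = (case u of (x1, x2, x3) \<Rightarrow>
      ((x1 + x2) mod p, (x2 + x3) mod p, (x3 + x1) mod p))"

definition ducci_period :: "int \<Rightarrow> int \<times> int \<times> int \<Rightarrow> nat" where
  "ducci_period p u =
     (LEAST k. k \<ge> 1 \<and> (\<exists>l. (ducci p ^^ (l + k)) u = (ducci p ^^ l) u))"

definition P3 :: "int \<Rightarrow> nat" where
  "P3 p = ducci_period p (0, 0, 1)"

end

theory Submission
  imports Defs "HOL-Number_Theory.Number_Theory"
begin

lemma per_step:
  fixes f :: "'a \<Rightarrow> 'a"
  assumes "(f ^^ (l + P)) u = (f ^^ l) u" "n \<ge> l"
  shows "(f ^^ (n + j * P)) u = (f ^^ n) u"
proof (induction j)
  case 0 then show ?case by simp
next
  case (Suc j)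
  have e1: "n + Suc j * P = (n + j * P - l) + (l + P)" using assms(2) by simp
  have e2: "n + j * P = (n + j * P - l) + l" using assms(2) by simp
  have "(f ^^ (n + Suc j * P)) u = (f ^^ (n + j * P - l)) ((f ^^ (l + P)) u)"
    by (simp only: e1 funpow_add comp_def)
  also have "\<dots> = (f ^^ (n + j * P - l)) ((f ^^ l) u)"
    using assms(1) by simp
  also have "\<dots> = (f ^^ ((n + j * P - l) + l)) u"
    by (simp only: funpow_add comp_def)
  also have "\<dots> = (f ^^ (n + j * P)) u"
    using assms(2) by simp
  finally show ?case using Suc by simp
qed

lemma least_period_dvd:
  assumes "K \<ge> 1" "(f ^^ K) u = u"
  shows "(LEAST k. k \<ge> 1 \<and> (\<exists>l. (f ^^ (l + k)) u = (f ^^ l) u)) dvd K"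
proof -
  let ?Q = "\<lambda>k. k \<ge> 1 \<and> (\<exists>l. (f ^^ (l + k)) u = (f ^^ l) u)"
  define P where "P = (LEAST k. ?Q k)"
  have QK: "?Q K" using assms by (intro conjI exI[of _ 0]) auto
  have QP: "?Q P" unfolding P_def by (rule LeastI[of ?Q K, OF QK])
  then obtain l where l: "(f ^^ (l + P)) u = (f ^^ l) u" and P1: "P \<ge> 1" by auto
  define r where "r = K mod P"
  have "(f ^^ (l + r)) u = (f ^^ (l + r + (K div P) * P)) u"
    using per_step[OF l, of "l + r" "K div P"] by simp
  also have "l + r + (K div P) * P = l + K" unfolding r_def by simp
  also have "(f ^^ (l + K)) u = (f ^^ l) u" using assms(2) by (simp add: funpow_add)
  finally have rr: "(f ^^ (l + r)) u = (f ^^ l) u" .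
  have "r = 0"
  proof (rule ccontr)
    assume "r \<noteq> 0"
    then have "?Q r" using rr by auto
    then have "P \<le> r" unfolding P_def by (rule Least_le)
    moreover have "r < P" unfolding r_def using P1 by simp
    ultimately show False by simp
  qed
  then show ?thesis unfolding P_def r_def by auto
qed

definition dd :: "int \<times> int \<times> int \<Rightarrow> int \<times> int \<times> int" where
  "dd u = (case u of (x1, x2, x3) \<Rightarrow> (x1 + x2, x2 + x3, x3 + x1))"

definition modv :: "int \<Rightarrow> int \<times> int \<times> int \<Rightarrow> int \<times> int \<times> int" where
  "modv p u = (case u of (x1, x2, x3) \<Rightarrow> (x1 mod p, x2 mod p, x3 mod p))"

lemma ducci_modv: "ducci p (modv p v) = modv p (dd v)"
  by (cases v) (simp add: ducci_def modv_def dd_def mod_add_eq)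

lemma ducci_iter: "(ducci p ^^ n) (modv p v) = modv p ((dd ^^ n) v)"
  by (induction n) (simp_all add: ducci_modv)

lemma dd6: "(dd ^^ 6) (x, y, z) = (x + 21 * (x+y+z), y + 21 * (x+y+z), z + 21 * (x+y+z))"
  by (simp add: dd_def numeral_eq_Suc)

lemma dd6m: "\<exists>c. 3 * c = 64 ^ m - 1 \<and>
   (dd ^^ (6 * m)) (x, y, z) = (x + c * (x+y+z), y + c * (x+y+z), z + c * (x+y+z))"
proof (induction m)
  case 0 then show ?case by simp
next
  case (Suc m)
  then obtain c where c: "3 * c = 64 ^ m - 1"
    "(dd ^^ (6 * m)) (x, y, z) = (x + c * (x+y+z), y + c * (x+y+z), z + c * (x+y+z))" by blast
  have "(dd ^^ (6 * Suc m)) (x, y, z) = (dd ^^ 6) ((dd ^^ (6 * m)) (x, y, z))"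
    by (simp only: mult_Suc_right funpow_add comp_def)
  also have "\<dots> = (x + (c + 21 * (1 + 3*c)) * (x+y+z), y + (c + 21 * (1 + 3*c)) * (x+y+z),
       z + (c + 21 * (1 + 3*c)) * (x+y+z))"
    unfolding c(2) dd6 by (simp add: algebra_simps)
  finally have f: "(dd ^^ (6 * Suc m)) (x, y, z) = (x + (c + 21 * (1 + 3*c)) * (x+y+z), y + (c + 21 * (1 + 3*c)) * (x+y+z),
       z + (c + 21 * (1 + 3*c)) * (x+y+z))" .
  have h: "64^m = 3*c+1" using c(1) by simp
  have "3 * (c + 21*(1+3*c)) = 64 ^ Suc m - 1" by (simp add: h algebra_simps)
  with f show ?case by blast
qed

lemma key:
  fixes p :: int
  assumes "prime p" "p \<noteq> 3" "p dvd 2 ^ (6 * m) - 1" "m \<ge> 1"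
  shows "int (P3 p) dvd int (6 * m)"
proof -
  obtain c where c: "3 * c = 64 ^ m - 1"
    "(dd ^^ (6 * m)) (0, 0, 1) = (c, c, 1 + c)"
    using dd6m[of m 0 0 1] by auto
  have "(64::int) ^ m = 2 ^ (6 * m)" by (simp add: power_mult)
  then have d3: "p dvd 3 * c" using c(1) assms(3) by simp
  have p1: "p > 1" using assms(1) prime_gt_1_int by blast
  have "\<not> p dvd 3"
  proof
    assume "p dvd 3"
    then have "p \<le> 3" by (simp add: zdvd_imp_le)
    then have "p = 2" using p1 assms(2) by simp
    with \<open>p dvd 3\<close> show False by simp
  qed
  then have "coprime p 3"
    using assms(1) by (simp add: prime_imp_coprime)
  with d3 have pc: "p dvd c" using coprime_dvd_mult_right_iff by blast
  have u: "modv p (0, 0, 1) = (0, 0, 1)" using p1 by (simp add: modv_def)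
  have "(ducci p ^^ (6 * m)) (0, 0, 1) = (0, 0, 1)"
  proof -
    have cm: "c mod p = 0" using pc by simp
    have cm1: "(1 + c) mod p = 1" using p1 cm by (simp add: mod_add_right_eq[symmetric])
    have "(ducci p ^^ (6 * m)) (0, 0, 1) = modv p (c, c, 1 + c)"
      using ducci_iter[where p=p and n="6*m" and v="(0,0,1)"] u c(2) by simp
    also have "\<dots> = (0, 0, 1)" using cm cm1 by (simp add: modv_def)
    finally show ?thesis .
  qed
  then have "P3 p dvd 6 * m"
    unfolding P3_def ducci_period_def by (rule least_period_dvd[rotated]) (use assms in simp)
  then show ?thesis by (metis int_dvd_int_iff)
qed

lemma ferm2:
  fixes p :: int
  assumes "prime p" "p \<noteq> 2"
  shows "[2 ^ nat (p - 1) = 1] (mod p)"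
proof -
  have p0: "p \<ge> 0" using assms(1) prime_ge_0_int by blast
  define q where "q = nat p"
  have pq: "p = int q" using p0 q_def by simp
  have q: "prime q" using assms(1) pq by (simp add: prime_nat_int_transfer)
  have "\<not> q dvd 2"
  proof
    assume "q dvd 2"
    then have "q \<le> 2" by (simp add: dvd_imp_le)
    moreover have "q \<ge> 2" using q prime_ge_2_nat by blast
    ultimately show False using assms(2) pq by simp
  qed
  then have "[2 ^ (q - 1) = 1] (mod q)" using fermat_theorem q by blast
  then have "[int (2 ^ (q - 1)) = int 1] (mod int q)" using cong_int_iff by blast
  moreover have "nat (p - 1) = q - 1" using pq by simp
  ultimately show ?thesis using pq by simp
qed

theorem theorem4p4:
  fixes p :: int
  assumes "prime p"
  shows "(p mod 6 = 1 \<longrightarrow> int (P3 p) dvd p - 1)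
       \<and> (p mod 6 = 5 \<longrightarrow> int (P3 p) dvd 3 * (p - 1))"
proof (intro conjI impI)
  have p1: "p > 1" using assms(1) prime_gt_1_int by blast
  assume h: "p mod 6 = 1"
  then have n23: "p \<noteq> 2" "p \<noteq> 3" by auto
  have f: "[2 ^ nat (p - 1) = 1] (mod p)" using ferm2 assms n23 by blast
  define m where "m = nat ((p - 1) div 6)"
  have md: "(p - 1) mod 6 = 0" using h by presburger
  have mm: "6 * ((p - 1) div 6) + (p - 1) mod 6 = p - 1" by (rule mult_div_mod_eq)
  have mp: "(p - 1) div 6 \<ge> 0" using p1 by simp
  have m6: "int (6 * m) = p - 1" using md mm mp unfolding m_def by simp
  have m1: "m \<ge> 1" using m6 p1 by linarith
  have "nat (p - 1) = 6 * m" using m6 by simp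
  then have "p dvd 2 ^ (6 * m) - 1" using f by (simp add: cong_iff_dvd_diff)
  then show "int (P3 p) dvd p - 1" using key[OF assms n23(2) _ m1] m6 by simp
next
  have p1: "p > 1" using assms(1) prime_gt_1_int by blast
  assume h: "p mod 6 = 5"
  then have n23: "p \<noteq> 2" "p \<noteq> 3" by auto
  have f: "[2 ^ nat (p - 1) = 1] (mod p)" using ferm2 assms n23 by blast
  then have f3: "[(2 ^ nat (p - 1)) ^ 3 = 1 ^ 3] (mod p)" by (rule cong_pow)
  define m where "m = nat ((p - 1) div 2)"
  have md: "(p - 1) mod 2 = 0" using h by presburger
  have mm: "2 * ((p - 1) div 2) + (p - 1) mod 2 = p - 1" by (rule mult_div_mod_eq)
  have mp: "(p - 1) div 2 \<ge> 0" using p1 by simp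
  have m6: "int (6 * m) = 3 * (p - 1)" using md mm mp unfolding m_def by simp
  have "6 * int m > 0" using m6 p1 by (simp only: of_nat_mult of_nat_numeral) (simp add: algebra_simps)
  then have m1: "m \<ge> 1" by simp
  have "nat (p - 1) * 3 = 6 * m" using m6 by simp
  then have "p dvd 2 ^ (6 * m) - 1" using f3
    by (simp add: cong_iff_dvd_diff power_mult[symmetric])
  then show "int (P3 p) dvd 3 * (p - 1)" using key[OF assms n23(2) _ m1] m6 by simp
qed

end
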